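(* Let $0<p\le q<\infty$ and let $k,l,n$ be positive integers. Put $\bar p=\min(1,p)$. Then $$ e_{k+l-1}\bigl(id:\ell_p^n(\mathbb{R})\to\ell_q^n(\mathbb{R})\bigr)\le 2^{1/\bar p}\, e^{p/q}_k\bigl(id:\ell_p^n(\mathbb{R})\to\ell_p^n(\mathbb{R})\bigr)\cdot e_l^{1-p/q}\bigl(id:\ell_p^n(\mathbb{R})\to\ell_\infty^n(\mathbb{R})\bigr). $$
   Context: For $0<p\le\infty$, $\ell_p^n(\mathbb{R})$ denotes $\mathbb{R}^n$ with the (quasi-)norm $\|x\|_p=(\sum_{i=1}^n|x_i|^p)^{1/p}$ for $p<\infty$ and $\|x\|_\infty=\max_i|x_i|$; its unit ball is $B_p^n$. For a bounded linear operator $T:X\to Y$ between quasi-Banach spaces and $k\in\mathbb{N}$, the $k$-th (dyadic) entropy number is $e_k(T)=\inf\{r>0:\exists y_1,\dots,y_{2^{k-1}}\in Y \text{ with } T(B_X)\subset\bigcup_{j=1}^{2^{k-1}}(y_j+rB_Y)\}$, where $B_X,B_Y$ are the closed unit balls. The identity $id:\ell_p^n\to\ell_q^n$ is the identity map on $\mathbb{R}^n$ viewed between these spaces. *)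

theory Defs
  imports "HOL-Analysis.Analysis"
begin

definition lp_norm :: "real \<Rightarrow> real ^ 'n \<Rightarrow> real" where
  "lp_norm p x = (\<Sum>i\<in>UNIV. \<bar>x $ i\<bar> powr p) powr (1 / p)"

definition linf_norm :: "real ^ 'n \<Rightarrow> real" where
  "linf_norm x = Max ((\<lambda>i. \<bar>x $ i\<bar>) ` UNIV)"

text \<open>k-th dyadic entropy number of the identity map from (R^n, NX) to (R^n, NY):
  infimum of r > 0 such that the closed unit ball of NX is covered by 2^(k-1)
  closed NY-balls of radius r (centres anywhere in R^n).\<close>
definition entropy_id ::
  "(real ^ 'n \<Rightarrow> real) \<Rightarrow> (real ^ 'n \<Rightarrow> real) \<Rightarrow> nat \<Rightarrow> real" where
  "entropy_id NX NY k = Inf {r. r > 0 \<and>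
     (\<exists>ys :: nat \<Rightarrow> real ^ 'n. \<forall>x. NX x \<le> 1 \<longrightarrow>
        (\<exists>j < 2 ^ (k - 1). NY (x - ys j) \<le> r))}"

end

theory Submission
  imports Defs
begin

lemma sub_add_le:
  fixes x y p :: real
  assumes "0 < p" "p \<le> 1" "0 \<le> x" "0 \<le> y"
  shows "(x + y) powr p \<le> x powr p + y powr p"
proof (cases "x + y = 0")
  case True then show ?thesis using assms by simp
next
  case False
  then have s: "x + y > 0" using assms by linarith
  have a: "x / (x+y) \<le> (x/(x+y)) powr p"
    using powr_mono'[of p 1 "x/(x+y)"] assms s by simp
  have b: "y / (x+y) \<le> (y/(x+y)) powr p"
    using powr_mono'[of p 1 "y/(x+y)"] assms s by simp
  have "1 = x/(x+y) + y/(x+y)" using s by (simp add: add_divide_distrib[symmetric])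
  also have "\<dots> \<le> (x powr p + y powr p) / (x+y) powr p"
    using a b by (simp add: powr_divide add_divide_distrib)
  finally show ?thesis using s by (simp add: field_simps)
qed

lemma conv_add_le:
  fixes x y p :: real
  assumes "1 \<le> p" "0 \<le> x" "0 \<le> y"
  shows "(x + y) powr p \<le> 2 powr (p - 1) * (x powr p + y powr p)"
proof -
  have g1: "1 \<le> 2 powr (p - 1)" using assms ge_one_powr_ge_zero by simp
  show ?thesis
  proof (cases "x = 0 \<or> y = 0")
    case True
    then show ?thesis using g1 assms
      by (auto intro: order_trans[OF _ mult_right_mono[OF g1]])
  next
    case False
    then have xy: "x > 0" "y > 0" using assms by auto
    have "((1 - 1/2) *\<^sub>R x + (1/2) *\<^sub>R y) powr p \<le> (1 - 1/2) * x powr p + (1/2) * y powr p"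
      using convex_onD[OF powr_convex[OF assms(1)], of "1/2" x y] xy by simp
    then have c: "((x+y)/2) powr p \<le> (x powr p + y powr p)/2" by (simp add: field_simps)
    have "(x+y) powr p = 2 powr p * ((x+y)/2) powr p"
      by (simp add: powr_divide)
    also have "\<dots> \<le> 2 powr p * ((x powr p + y powr p)/2)"
      using c by (simp add: mult_left_mono)
    also have "\<dots> = 2 powr (p - 1) * (x powr p + y powr p)"
      by (simp add: powr_diff)
    finally show ?thesis .
  qed
qed

lemma pq_add_le:
  fixes x y p :: real
  assumes "0 < p" "0 \<le> x" "0 \<le> y"
  shows "(x + y) powr p \<le> 2 powr (p / min 1 p - 1) * (x powr p + y powr p)"
proof (cases "p \<le> 1")
  case True then show ?thesis using sub_add_le[OF assms(1) True assms(2,3)] assms by simp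
next
  case False then show ?thesis using conv_add_le[of p x y] assms by simp
qed

lemma comp_le_lp:
  fixes v :: "real ^ 'n"
  assumes "0 < p"
  shows "\<bar>v $ i\<bar> \<le> lp_norm p v"
proof -
  have "\<bar>v $ i\<bar> = (\<bar>v $ i\<bar> powr p) powr (1/p)"
    using assms by (simp add: powr_powr)
  also have "\<dots> \<le> (\<Sum>j\<in>UNIV. \<bar>v $ j\<bar> powr p) powr (1/p)"
    using assms by (intro powr_mono2) (auto intro: member_le_sum)
  finally show ?thesis unfolding lp_norm_def .
qed

lemma comp_le_linf:
  fixes v :: "real ^ 'n"
  shows "\<bar>v $ i\<bar> \<le> linf_norm v"
  unfolding linf_norm_def by (rule Max_ge) auto

lemma lp_unit:
  assumes "0 < p"
  shows "lp_norm p ((\<chi> j. if j = i then t else 0) :: real ^ 'n) = \<bar>t\<bar>"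
proof -
  have "(\<Sum>j\<in>UNIV. \<bar>((\<chi> j. if j = i then t else 0) :: real ^ 'n) $ j\<bar> powr p)
     = (\<Sum>j\<in>UNIV. if j = i then \<bar>t\<bar> powr p else 0)"
    by (intro sum.cong) auto
  also have "\<dots> = \<bar>t\<bar> powr p" by simp
  finally show ?thesis using assms unfolding lp_norm_def by (simp add: powr_powr)
qed

lemma lp_sum_le:
  fixes v :: "real ^ 'n"
  assumes "0 < p" "lp_norm p v \<le> s"
  shows "(\<Sum>j\<in>UNIV. \<bar>v $ j\<bar> powr p) \<le> s powr p"
proof -
  have "(\<Sum>j\<in>UNIV. \<bar>v $ j\<bar> powr p) = ((\<Sum>j\<in>UNIV. \<bar>v $ j\<bar> powr p) powr (1/p)) powr p"
    using assms by (simp add: powr_powr sum_nonneg)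
  also have "\<dots> \<le> s powr p"
    using assms unfolding lp_norm_def by (intro powr_mono2) auto
  finally show ?thesis .
qed

lemma entropy_pos:
  fixes NX NY :: "real ^ 'n \<Rightarrow> real" and i0 :: 'n
  assumes comp: "\<And>v i. \<bar>v $ i\<bar> \<le> NY v"
    and unit: "\<And>t. 0 \<le> t \<Longrightarrow> t \<le> 1 \<Longrightarrow> NX (\<chi> j. if j = i0 then t else 0) \<le> 1"
    and ne: "\<exists>r. r > 0 \<and> (\<exists>ys :: nat \<Rightarrow> real ^ 'n. \<forall>x. NX x \<le> 1 \<longrightarrow>
        (\<exists>j < 2 ^ (k - 1). NY (x - ys j) \<le> r))"
  shows "entropy_id NX NY k > 0"
proof -
  define N :: nat where "N = 2 ^ (k - 1)"
  have Npos: "N > 0" unfolding N_def by simp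
  have lb: "1 / (2 * real N) \<le> r" if r: "r \<in> {r. r > 0 \<and> (\<exists>ys :: nat \<Rightarrow> real ^ 'n. \<forall>x. NX x \<le> 1 \<longrightarrow>
        (\<exists>j < 2 ^ (k - 1). NY (x - ys j) \<le> r))}" for r
  proof -
    from r obtain ys :: "nat \<Rightarrow> real ^ 'n" where ys: "\<forall>x. NX x \<le> 1 \<longrightarrow> (\<exists>j < N. NY (x - ys j) \<le> r)"
      unfolding N_def by auto
    define xx :: "nat \<Rightarrow> real ^ 'n" where "xx m = (\<chi> j. if j = i0 then real m / real N else 0)" for m
    have "\<forall>m\<in>{0..N}. \<exists>j < N. NY (xx m - ys j) \<le> r"
    proof
      fix m assume "m \<in> {0..N}"
      then have "NX (xx m) \<le> 1" unfolding xx_def using Npos by (intro unit) auto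
      then show "\<exists>j < N. NY (xx m - ys j) \<le> r" using ys by auto
    qed
    then obtain f where f: "\<And>m. m \<in> {0..N} \<Longrightarrow> f m < N \<and> NY (xx m - ys (f m)) \<le> r"
      by metis
    have "f ` {0..N} \<subseteq> {..<N}" using f by auto
    then have "card (f ` {0..N}) \<le> N" by (metis card_lessThan card_mono finite_lessThan)
    then have "\<not> inj_on f {0..N}" by (intro pigeonhole) simp
    then obtain m1 m2 where m: "m1 \<in> {0..N}" "m2 \<in> {0..N}" "m1 \<noteq> m2" "f m1 = f m2"
      unfolding inj_on_def by blast
    have "1 / real N \<le> \<bar>real m1 - real m2\<bar> / real N"
      using m(3) Npos by (intro divide_right_mono) auto
    also have "\<dots> = \<bar>(xx m1 - ys (f m1)) $ i0 - (xx m2 - ys (f m2)) $ i0\<bar>"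
      using m(4) Npos unfolding xx_def by (simp add: diff_divide_distrib[symmetric])
    also have "\<dots> \<le> \<bar>(xx m1 - ys (f m1)) $ i0\<bar> + \<bar>(xx m2 - ys (f m2)) $ i0\<bar>" by simp
    also have "\<dots> \<le> r + r" using comp[of "xx m1 - ys (f m1)" i0] comp[of "xx m2 - ys (f m2)" i0]
        f[OF m(1)] f[OF m(2)] by linarith
    finally show ?thesis using Npos by (simp add: field_simps)
  qed
  have "1 / (2 * real N) \<le> entropy_id NX NY k"
    unfolding entropy_id_def using ne lb by (intro cInf_greatest) auto
  moreover have "1 / (2 * real N) > 0" using Npos by simp
  ultimately show ?thesis by linarith
qed

lemma interp:
  fixes u :: "real ^ 'n"
  assumes "0 < p" "p \<le> q" "0 \<le> M" "\<And>i. \<bar>u $ i\<bar> \<le> M"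
    and P: "(\<Sum>j\<in>UNIV. \<bar>u $ j\<bar> powr p) \<le> P"
  shows "lp_norm q u \<le> P powr (1/q) * M powr (1 - p/q)"
proof -
  have q: "0 < q" using assms by linarith
  have "(\<Sum>j\<in>UNIV. \<bar>u $ j\<bar> powr q) \<le> (\<Sum>j\<in>UNIV. \<bar>u $ j\<bar> powr p * M powr (q - p))"
  proof (intro sum_mono)
    fix j
    have "\<bar>u $ j\<bar> powr q = \<bar>u $ j\<bar> powr p * \<bar>u $ j\<bar> powr (q - p)"
      by (simp add: powr_add[symmetric])
    also have "\<dots> \<le> \<bar>u $ j\<bar> powr p * M powr (q - p)"
      using assms by (intro mult_left_mono powr_mono2) auto
    finally show "\<bar>u $ j\<bar> powr q \<le> \<bar>u $ j\<bar> powr p * M powr (q - p)" .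
  qed
  also have "\<dots> = (\<Sum>j\<in>UNIV. \<bar>u $ j\<bar> powr p) * M powr (q - p)"
    by (simp add: sum_distrib_right)
  also have "\<dots> \<le> P * M powr (q - p)"
    using P by (intro mult_right_mono) auto
  finally have "lp_norm q u \<le> (P * M powr (q - p)) powr (1/q)"
    unfolding lp_norm_def using q by (intro powr_mono2) (auto intro: sum_nonneg)
  also have "\<dots> = P powr (1/q) * M powr ((q - p) * (1/q))"
    by (simp add: powr_mult powr_powr)
  also have "(q - p) * (1/q) = 1 - p/q" using q by (simp add: field_simps)
  finally show ?thesis .
qed

lemma main_cover:
  fixes p q s t :: real and k l :: nat
  assumes p: "0 < p" and pq: "p \<le> q" and k: "k \<ge> 1" and l: "l \<ge> 1"
    and s: "s \<in> {r. r > 0 \<and> (\<exists>ys :: nat \<Rightarrow> real ^ 'n. \<forall>x. lp_norm p x \<le> 1 \<longrightarrow>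
        (\<exists>j < 2 ^ (k - 1). lp_norm p (x - ys j) \<le> r))}"
    and t: "t \<in> {r. r > 0 \<and> (\<exists>ys :: nat \<Rightarrow> real ^ 'n. \<forall>x. lp_norm p x \<le> 1 \<longrightarrow>
        (\<exists>j < 2 ^ (l - 1). linf_norm (x - ys j) \<le> r))}"
  shows "entropy_id (lp_norm p :: real ^ 'n \<Rightarrow> real) (lp_norm q) (k + l - 1)
    \<le> 2 powr (1 / min 1 p) * s powr (p / q) * t powr (1 - p / q)"
proof -
  define K :: nat where "K = 2 ^ (k - 1)"
  define L :: nat where "L = 2 ^ (l - 1)"
  define pb where "pb = min 1 p"
  have pb: "0 < pb" "pb \<le> 1" "pb \<le> p" using p unfolding pb_def by auto
  have q: "0 < q" using p pq by linarith
  from s obtain ys :: "nat \<Rightarrow> real ^ 'n" where spos: "s > 0" and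
    ys: "\<And>x. lp_norm p x \<le> 1 \<Longrightarrow> \<exists>j < K. lp_norm p (x - ys j) \<le> s"
    unfolding K_def by auto
  from t obtain zs :: "nat \<Rightarrow> real ^ 'n" where tpos: "t > 0" and
    zs: "\<And>x. lp_norm p x \<le> 1 \<Longrightarrow> \<exists>j < L. linf_norm (x - zs j) \<le> t"
    unfolding L_def by auto
  define Q where "Q = (\<lambda>m w. lp_norm p (w - ys (m mod K)) \<le> s \<and> linf_norm (w - zs (m div K)) \<le> t)"
  define cs where "cs m = (SOME w. Q m w)" for m
  define R where "R = 2 powr (1 / pb) * s powr (p / q) * t powr (1 - p / q)"
  have Kpos: "K > 0" unfolding K_def by simp
  have KL: "K * L = 2 ^ (k + l - 1 - 1)"
    unfolding K_def L_def using k l by (simp add: power_add[symmetric])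
  have bound: "lp_norm q (x - w) \<le> R"
    if x1: "lp_norm p (x - y) \<le> s" and x2: "linf_norm (x - z) \<le> t"
      and w1: "lp_norm p (w - y) \<le> s" and w2: "linf_norm (w - z) \<le> t" for x w y z :: "real ^ 'n"
  proof -
    define C where "C = 2 powr (p / pb - 1)"
    have ui: "\<bar>(x - w) $ i\<bar> \<le> \<bar>(x - y) $ i\<bar> + \<bar>(w - y) $ i\<bar>" for i by simp
    have M: "\<bar>(x - w) $ i\<bar> \<le> 2 * t" for i
      using ui[of i] comp_le_linf[of "x - z" i] comp_le_linf[of "w - z" i] x2 w2
      by (smt (verit) vector_minus_component)
    have "(\<Sum>j\<in>UNIV. \<bar>(x - w) $ j\<bar> powr p)
        \<le> (\<Sum>j\<in>UNIV. C * (\<bar>(x - y) $ j\<bar> powr p + \<bar>(w - y) $ j\<bar> powr p))"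
    proof (intro sum_mono)
      fix j
      have "\<bar>(x - w) $ j\<bar> powr p \<le> (\<bar>(x - y) $ j\<bar> + \<bar>(w - y) $ j\<bar>) powr p"
        using p ui[of j] by (intro powr_mono2) auto
      also have "\<dots> \<le> C * (\<bar>(x - y) $ j\<bar> powr p + \<bar>(w - y) $ j\<bar> powr p)"
        unfolding C_def pb_def using pq_add_le[OF p] by simp
      finally show "\<bar>(x - w) $ j\<bar> powr p \<le> C * (\<bar>(x - y) $ j\<bar> powr p + \<bar>(w - y) $ j\<bar> powr p)" .
    qed
    also have "\<dots> = C * ((\<Sum>j\<in>UNIV. \<bar>(x - y) $ j\<bar> powr p) + (\<Sum>j\<in>UNIV. \<bar>(w - y) $ j\<bar> powr p))"
      by (simp only: sum_distrib_left[symmetric] sum.distrib)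
    also have "\<dots> \<le> C * (s powr p + s powr p)"
      using lp_sum_le[OF p x1] lp_sum_le[OF p w1] unfolding C_def
      by (intro mult_left_mono add_mono) auto
    also have "\<dots> = 2 powr (p / pb) * s powr p"
      unfolding C_def by (simp add: powr_diff)
    finally have P: "(\<Sum>j\<in>UNIV. \<bar>(x - w) $ j\<bar> powr p) \<le> 2 powr (p / pb) * s powr p" .
    have "lp_norm q (x - w) \<le> (2 powr (p / pb) * s powr p) powr (1/q) * (2 * t) powr (1 - p/q)"
      using interp[OF p pq _ M P] tpos by simp
    also have "\<dots> = 2 powr ((1/pb) * (p/q) + (1 - p/q)) * (s powr (p/q) * t powr (1 - p/q))"
      by (simp add: powr_mult powr_powr powr_add)
    also have "\<dots> \<le> 2 powr (1/pb) * (s powr (p/q) * t powr (1 - p/q))"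
    proof (intro mult_right_mono powr_mono)
      have "1 \<le> 1/pb" using pb by simp
      moreover have "p/q \<le> 1" using pq q by simp
      ultimately have "(1/pb - 1) * (p/q - 1) \<le> 0" by (intro mult_nonneg_nonpos) auto
      then show "(1/pb) * (p/q) + (1 - p/q) \<le> 1/pb" by (simp add: algebra_simps)
    qed auto
    finally show ?thesis unfolding R_def by (simp add: mult.assoc)
  qed
  have Rpos: "R > 0" unfolding R_def using spos tpos by simp
  have cover: "\<exists>j < 2 ^ (k + l - 1 - 1). lp_norm q (x - cs j) \<le> R" if x: "lp_norm p x \<le> 1" for x
  proof -
    obtain j where j: "j < K" "lp_norm p (x - ys j) \<le> s" using ys[OF x] by auto
    obtain i where i: "i < L" "linf_norm (x - zs i) \<le> t" using zs[OF x] by auto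
    define m where "m = j + K * i"
    have mm: "m mod K = j" "m div K = i" unfolding m_def using j(1) by auto
    have "m < K * L"
    proof -
      have "m < K + K * i" unfolding m_def using j by simp
      also have "\<dots> = K * (i + 1)" by simp
      also have "\<dots> \<le> K * L" using i(1) by (intro mult_left_mono) auto
      finally show ?thesis .
    qed
    have "Q m x" unfolding Q_def mm using j i by simp
    then have Qc: "Q m (cs m)" unfolding cs_def by (rule someI)
    have "lp_norm q (x - cs m) \<le> R"
      using Qc j i unfolding Q_def mm by (intro bound) auto
    then show ?thesis using \<open>m < K * L\<close> KL by auto
  qed
  have mem: "R \<in> {r. r > 0 \<and> (\<exists>ys :: nat \<Rightarrow> real ^ 'n. \<forall>x. lp_norm p x \<le> 1 \<longrightarrow>
        (\<exists>j < 2 ^ (k + l - 1 - 1). lp_norm q (x - ys j) \<le> r))}"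
      using Rpos cover by blast
  have "entropy_id (lp_norm p :: real ^ 'n \<Rightarrow> real) (lp_norm q) (k + l - 1) \<le> R"
    unfolding entropy_id_def
    by (rule cInf_lower[OF mem]) (auto intro: bdd_belowI[of _ 0])
  then show ?thesis unfolding R_def pb_def .
qed

theorem lemma8:
  fixes p q :: real and k l :: nat
  assumes "0 < p" and "p \<le> q" and "k \<ge> 1" and "l \<ge> 1"
  shows "entropy_id (lp_norm p :: real ^ 'n \<Rightarrow> real) (lp_norm q) (k + l - 1)
    \<le> 2 powr (1 / min 1 p)
       * entropy_id (lp_norm p :: real ^ 'n \<Rightarrow> real) (lp_norm p) k powr (p / q)
       * entropy_id (lp_norm p :: real ^ 'n \<Rightarrow> real) linf_norm l powr (1 - p / q)"
proof -
  define S1 where "S1 = {r. r > 0 \<and> (\<exists>ys :: nat \<Rightarrow> real ^ 'n. \<forall>x. lp_norm p x \<le> 1 \<longrightarrow>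
        (\<exists>j < 2 ^ (k - 1). lp_norm p (x - ys j) \<le> r))}"
  define S2 where "S2 = {r. r > 0 \<and> (\<exists>ys :: nat \<Rightarrow> real ^ 'n. \<forall>x. lp_norm p x \<le> 1 \<longrightarrow>
        (\<exists>j < 2 ^ (l - 1). linf_norm (x - ys j) \<le> r))}"
  define E where "E = entropy_id (lp_norm p :: real ^ 'n \<Rightarrow> real) (lp_norm q) (k + l - 1)"
  define e1 where "e1 = entropy_id (lp_norm p :: real ^ 'n \<Rightarrow> real) (lp_norm p) k"
  define e2 where "e2 = entropy_id (lp_norm p :: real ^ 'n \<Rightarrow> real) linf_norm l"
  define c where "c = 2 powr (1 / min 1 p)"
  have q: "0 < q" using assms by linarith
  have e1d: "e1 = Inf S1" unfolding e1_def S1_def entropy_id_def ..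
  have e2d: "e2 = Inf S2" unfolding e2_def S2_def entropy_id_def ..
  have linf_le: "linf_norm x \<le> lp_norm p x" for x :: "real ^ 'n"
    unfolding linf_norm_def using comp_le_lp[OF assms(1)] by (subst Max_le_iff) auto
  have ne1: "\<exists>r. r > 0 \<and> (\<exists>ys :: nat \<Rightarrow> real ^ 'n. \<forall>x. lp_norm p x \<le> 1 \<longrightarrow>
        (\<exists>j < 2 ^ (k - 1). lp_norm p (x - ys j) \<le> r))"
    by (intro exI[of _ 1] conjI exI[of _ "\<lambda>_. 0"]) (auto intro!: exI[of _ 0])
  have ne2: "\<exists>r. r > 0 \<and> (\<exists>ys :: nat \<Rightarrow> real ^ 'n. \<forall>x. lp_norm p x \<le> 1 \<longrightarrow>
        (\<exists>j < 2 ^ (l - 1). linf_norm (x - ys j) \<le> r))"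
    using linf_le by (intro exI[of _ 1] conjI exI[of _ "\<lambda>_. 0"]) (auto intro!: exI[of _ 0] intro: order_trans)
  have S1ne: "S1 \<noteq> {}" using ne1 unfolding S1_def by auto
  have S2ne: "S2 \<noteq> {}" using ne2 unfolding S2_def by auto
  have unit: "lp_norm p ((\<chi> j. if j = undefined then t else 0) :: real ^ 'n) \<le> 1"
    if "0 \<le> t" "t \<le> 1" for t
    using lp_unit[OF assms(1), of "undefined :: 'n" t] that by simp
  have e1pos: "e1 > 0" unfolding e1_def
    by (rule entropy_pos[OF comp_le_lp[OF assms(1)] unit ne1])
  have e2pos: "e2 > 0" unfolding e2_def
    by (rule entropy_pos[OF comp_le_linf unit ne2])
  define f where "f n = c * (e1 + 1 / Suc n) powr (p/q) * (e2 + 1 / Suc n) powr (1 - p/q)" for n :: nat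
  have le: "E \<le> f n" for n
  proof -
    have d: "0 < 1 / real (Suc n)" by simp
    obtain s where s: "s \<in> S1" "s < e1 + 1 / Suc n"
      using cInf_lessD[OF S1ne, of "e1 + 1 / Suc n"] d e1d by auto
    obtain t where t: "t \<in> S2" "t < e2 + 1 / Suc n"
      using cInf_lessD[OF S2ne, of "e2 + 1 / Suc n"] d e2d by auto
    have sp: "s > 0" "t > 0" using s t unfolding S1_def S2_def by auto
    have "E \<le> c * s powr (p / q) * t powr (1 - p / q)"
      unfolding E_def c_def using main_cover[OF assms] s(1) t(1) unfolding S1_def S2_def by blast
    also have "\<dots> \<le> f n" unfolding f_def c_def
      using s t sp assms q
      by (intro mult_mono powr_mono2) auto
    finally show ?thesis .
  qed
  have lim: "f \<longlonglongrightarrow> c * e1 powr (p/q) * e2 powr (1 - p/q)"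
  proof -
    have h: "(\<lambda>n. 1 / real (Suc n)) \<longlonglongrightarrow> 0"
      using LIMSEQ_Suc[OF lim_inverse_n'] by simp
    have h1: "(\<lambda>n. e1 + 1 / real (Suc n)) \<longlonglongrightarrow> e1"
      using tendsto_add[OF tendsto_const h, of e1] by simp
    have h2: "(\<lambda>n. e2 + 1 / real (Suc n)) \<longlonglongrightarrow> e2"
      using tendsto_add[OF tendsto_const h, of e2] by simp
    have a1: "(\<lambda>n. (e1 + 1 / real (Suc n)) powr (p/q)) \<longlonglongrightarrow> e1 powr (p/q)"
      using tendsto_powr[OF h1 tendsto_const] e1pos by simp
    have a2: "(\<lambda>n. (e2 + 1 / real (Suc n)) powr (1 - p/q)) \<longlonglongrightarrow> e2 powr (1 - p/q)"
      using tendsto_powr[OF h2 tendsto_const] e2pos by simp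
    show ?thesis unfolding f_def
      by (intro tendsto_mult tendsto_const a1 a2)
  qed
  have "E \<le> c * e1 powr (p/q) * e2 powr (1 - p/q)"
    using lim le by (intro LIMSEQ_le_const) auto
  then show ?thesis unfolding E_def c_def e1_def e2_def .
qed

end
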